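(* Assume (A1) and (A3). Let $x\in\mathcal{C}$ with $\beta>\max\{\beta_1(x),\beta_2(x),\beta_3(x)\}$, and assume $\|\nabla g(x)\|\le\varepsilon_1$ for some $\varepsilon_1\le R/2$. Then for any $d\in\mathcal{E}$ with $\|d\|=1$, the point $x+td$ lies in $\mathcal{C}$ for all $t\in[0,t_2(x)]$, where $$t_2(x)=\frac{-\sigma_1(\mathrm{D}h(x))+\sqrt{\sigma_1(\mathrm{D}h(x))^2+2C_hR}}{2C_h}.$$
   Context: Let $\mathcal{E}$ be a Euclidean space with inner product $\langle\cdot,\cdot\rangle$ and norm $\|\cdot\|$ (2-norm on $\mathbb{R}^m$), and $f\colon\mathcal{E}\to\mathbb{R}$, $h\colon\mathcal{E}\to\mathbb{R}^m$ be $C^\infty$. $\mathrm{D}h(x)$ is the differential, $\mathrm{D}h(x)^*$ its adjoint, $\sigma_1$ and $\sigma_{\min}=\sigma_m$ the largest and $m$-th singular values. $\mathcal{D}=\{x:\operatorname{rank}\mathrm{D}h(x)=m\}$; for $x\in\mathcal{D}$, $\lambda(x)=(\mathrm{D}h(x)^* )^\dagger[\nabla f(x)]$ (Moore–Penrose). For $\beta\ge0$, $g(x)=f(x)-\langle h(x),\lambda(x)\rangle+\beta\|h(x)\|^2$. (A1): there are $R,\underline{\sigma}>0$ with $\sigma_{\min}(\mathrm{D}h(x))\ge\underline{\sigma}$ for all $x\in\mathcal{C}=\{x:\|h(x)\|\le R\}$. (A3): there is $C_h>0$ with $h(x+v)=h(x)+\mathrm{D}h(x)[v]+E(x,v)$,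 $\|E(x,v)\|\le C_h\|v\|^2$ for all $x\in\mathcal{C}$, $v\in\mathcal{E}$. For $x\in\mathcal{C}$: $C_\lambda(x)=\|\mathrm{D}\lambda(x)\|_{\mathrm{op}}$, $\beta_1(x)=\sigma_1(\mathrm{D}h(x))C_\lambda(x)/(2\sigma_{\min}(\mathrm{D}h(x))^2)$, $\beta_2(x)=C_\lambda(x)/\sigma_{\min}(\mathrm{D}h(x))$, $\beta_3(x)=1/\sigma_{\min}(\mathrm{D}h(x))$. *)

theory Defs
  imports "HOL-Analysis.Analysis"
begin

primrec iter_dd :: "'a::real_normed_vector list \<Rightarrow> ('a \<Rightarrow> 'b::real_normed_vector) \<Rightarrow> 'a \<Rightarrow> 'b" where
  "iter_dd [] f = f"
| "iter_dd (v # vs) f = (\<lambda>x. frechet_derivative (iter_dd vs f) (at x) v)"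

definition smooth :: "('a::real_normed_vector \<Rightarrow> 'b::real_normed_vector) \<Rightarrow> bool" where
  "smooth f \<longleftrightarrow> (\<forall>vs x. iter_dd vs f differentiable (at x))"

definition grad :: "('a::real_inner \<Rightarrow> real) \<Rightarrow> 'a \<Rightarrow> 'a" where
  "grad f x = (SOME D. GDERIV f x :> D)"

definition Dh :: "('a::real_normed_vector \<Rightarrow> 'b::real_normed_vector) \<Rightarrow> 'a \<Rightarrow> 'a \<Rightarrow> 'b" where
  "Dh h x = frechet_derivative h (at x)"

definition moore_penrose :: "('b::real_inner \<Rightarrow> 'a::real_inner) \<Rightarrow> 'a \<Rightarrow> 'b" where
  "moore_penrose B = (THE P. linear P \<and> (\<forall>u. B (P (B u)) = B u) \<and> (\<forall>w. P (B (P w)) = P w)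
      \<and> (\<forall>w z. B (P w) \<bullet> z = w \<bullet> B (P z)) \<and> (\<forall>u v. P (B u) \<bullet> v = u \<bullet> P (B v)))"

text \<open>k-th singular value of a linear map A (Courant-Fischer max-min characterisation);
  set to 0 when k = 0 or k exceeds the dimension of the domain.\<close>
definition sing_val :: "nat \<Rightarrow> ('a::euclidean_space \<Rightarrow> 'b::real_normed_vector) \<Rightarrow> real" where
  "sing_val k A = (if 0 < k \<and> k \<le> DIM('a) then
      Sup {Inf {norm (A v) | v. v \<in> V \<and> norm v = 1} | V. subspace V \<and> dim V = k}
    else 0)"

definition sigma1 :: "('a::euclidean_space \<Rightarrow> 'b::real_normed_vector) \<Rightarrow> real" where
  "sigma1 A = sing_val 1 A"

definition sigma_min :: "('a::euclidean_space \<Rightarrow> real^'m::finite) \<Rightarrow> real" where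
  "sigma_min A = sing_val CARD('m) A"

definition lam :: "('a::euclidean_space \<Rightarrow> real) \<Rightarrow> ('a \<Rightarrow> real^'m::finite) \<Rightarrow> 'a \<Rightarrow> real^'m" where
  "lam f h x = moore_penrose (adjoint (Dh h x)) (grad f x)"

definition gfun :: "('a::euclidean_space \<Rightarrow> real) \<Rightarrow> ('a \<Rightarrow> real^'m::finite) \<Rightarrow> real \<Rightarrow> 'a \<Rightarrow> real" where
  "gfun f h \<beta> x = f x - h x \<bullet> lam f h x + \<beta> * (norm (h x))\<^sup>2"

definition C_lam :: "('a::euclidean_space \<Rightarrow> real) \<Rightarrow> ('a \<Rightarrow> real^'m::finite) \<Rightarrow> 'a \<Rightarrow> real" where
  "C_lam f h x = onorm (frechet_derivative (lam f h) (at x))"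

definition beta1 :: "('a::euclidean_space \<Rightarrow> real) \<Rightarrow> ('a \<Rightarrow> real^'m::finite) \<Rightarrow> 'a \<Rightarrow> real" where
  "beta1 f h x = sigma1 (Dh h x) * C_lam f h x / (2 * (sigma_min (Dh h x))\<^sup>2)"

definition beta2 :: "('a::euclidean_space \<Rightarrow> real) \<Rightarrow> ('a \<Rightarrow> real^'m::finite) \<Rightarrow> 'a \<Rightarrow> real" where
  "beta2 f h x = C_lam f h x / sigma_min (Dh h x)"

definition beta3 :: "('a::euclidean_space \<Rightarrow> real^'m::finite) \<Rightarrow> 'a \<Rightarrow> real" where
  "beta3 h x = 1 / sigma_min (Dh h x)"

end

theory Submission
  imports Defs
begin


lemma grad_works:
  fixes F :: "'a::euclidean_space \<Rightarrow> real"
  assumes "(F has_derivative F') (at y)"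
  shows "grad F y \<bullet> v = F' v"
proof -
  have bl: "bounded_linear F'" using assms has_derivative_bounded_linear by blast
  then have lin: "linear F'" by (rule bounded_linear.linear)
  define D where "D = (\<Sum>b\<in>Basis. F' b *\<^sub>R b)"
  have Dv: "D \<bullet> v = F' v" for v
  proof -
    have "F' v = F' (\<Sum>b\<in>Basis. (v \<bullet> b) *\<^sub>R b)" by (simp add: euclidean_representation)
    also have "\<dots> = (\<Sum>b\<in>Basis. (v \<bullet> b) * F' b)"
      using lin by (simp add: linear_sum linear_scale)
    finally show ?thesis unfolding D_def by (simp add: inner_sum_right inner_commute mult.commute)
  qed
  have "(\<lambda>h. h \<bullet> D) = F'" using Dv by (auto simp: inner_commute)
  then have "GDERIV F y :> D" unfolding gderiv_def using assms by simp
  then have G: "GDERIV F y :> grad F y" unfolding grad_def by (rule someI)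
  have "(\<lambda>h. h \<bullet> grad F y) = F'"
    using has_derivative_unique[OF G[unfolded gderiv_def] assms] .
  then show ?thesis by (metis inner_commute)
qed

lemma adjoint_expand:
  fixes A :: "'a::euclidean_space \<Rightarrow> 'b::euclidean_space"
  assumes "linear A"
  shows "adjoint A u = (\<Sum>b\<in>Basis. (u \<bullet> A b) *\<^sub>R b)"
proof -
  have "adjoint A u = (\<Sum>b\<in>Basis. (adjoint A u \<bullet> b) *\<^sub>R b)" by (simp add: euclidean_representation)
  also have "\<dots> = (\<Sum>b\<in>Basis. (u \<bullet> A b) *\<^sub>R b)"
    using adjoint_works[OF assms] by (simp add: inner_commute)
  finally show ?thesis .
qed

lemma mp_normal:
  fixes A :: "'a::euclidean_space \<Rightarrow> real^'m::finite"
  assumes lin: "linear A" and inj: "inj (adjoint A)"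
  shows "A (adjoint A (moore_penrose (adjoint A) w)) = A w"
proof -
  define B where "B = adjoint A"
  have linB: "linear B" unfolding B_def using lin by (rule adjoint_linear)
  have aw: "\<And>x y. x \<bullet> B y = A x \<bullet> y" unfolding B_def using adjoint_works[OF lin] .
  define G where "G = A \<circ> B"
  have linG: "linear G" unfolding G_def using linear_compose[OF linB lin] .
  have injG: "inj G"
  proof (rule linear_inj_on_iff_eq_0[THEN iffD2, OF linG, of UNIV, simplified], intro allI impI)
    fix u assume "G u = 0"
    then have "B u \<bullet> B u = 0" using aw[of "B u" u] by (simp add: G_def)
    then have "B u = 0" by simp
    then show "u = 0" using inj linB unfolding B_def[symmetric] by (metis linear_0 injD)
  qed
  obtain Gi where Gi: "linear Gi" "\<And>x. Gi (G x) = x" "\<And>x. G (Gi x) = x"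
    using linear_injective_isomorphism[OF linG injG] by auto
  have Gsym: "G a \<bullet> b = a \<bullet> G b" for a b
    using aw by (metis G_def comp_apply inner_commute)
  have Gisym: "Gi a \<bullet> b = a \<bullet> Gi b" for a b
    using Gsym[of "Gi a" "Gi b"] Gi by simp
  define Q where "Q P \<longleftrightarrow> linear P \<and> (\<forall>u. B (P (B u)) = B u) \<and> (\<forall>w. P (B (P w)) = P w)
      \<and> (\<forall>w z. B (P w) \<bullet> z = w \<bullet> B (P z)) \<and> (\<forall>u v. P (B u) \<bullet> v = u \<bullet> P (B v))" for P
  define P0 where "P0 = Gi \<circ> A"
  have P0B: "P0 (B u) = u" for u using Gi unfolding P0_def G_def by simp
  have "Q P0"
    unfolding Q_def
  proof (intro conjI allI)
    show "linear P0" unfolding P0_def using Gi(1) lin by (simp add: linear_compose)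
    show "B (P0 (B u)) = B u" for u using P0B by simp
    show "P0 (B (P0 w)) = P0 w" for w using P0B by simp
    show "B (P0 w) \<bullet> z = w \<bullet> B (P0 z)" for w z
      unfolding P0_def using aw Gisym by (metis G_def Gi(3) comp_apply inner_commute)
    show "P0 (B u) \<bullet> v = u \<bullet> P0 (B v)" for u v using P0B by simp
  qed
  moreover have "P = P0" if "Q P" for P
  proof
    fix w
    have PB: "P (B u) = u" for u
      using that inj unfolding Q_def B_def[symmetric] by (meson injD)
    have Qs: "B (P w) \<bullet> z = w \<bullet> B (P z)" for w z using that unfolding Q_def by blast
    have Q0s: "B (P0 w) \<bullet> z = w \<bullet> B (P0 z)" for w z using \<open>Q P0\<close> unfolding Q_def by blast
    have e: "B (P w) = B (P0 w)"
    proof -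
      have "B (P w) \<bullet> z = B (P0 w) \<bullet> z" for z
      proof -
        have "B (P w) \<bullet> z = B (P0 (B (P w))) \<bullet> z" by (simp add: P0B)
        also have "\<dots> = B (P w) \<bullet> B (P0 z)" by (rule Q0s)
        also have "\<dots> = w \<bullet> B (P (B (P0 z)))" by (rule Qs)
        also have "\<dots> = w \<bullet> B (P0 z)" by (simp add: PB)
        also have "\<dots> = B (P0 w) \<bullet> z" by (simp add: Q0s)
        finally show ?thesis .
      qed
      then show ?thesis by (metis inner_diff_left inner_eq_zero_iff right_minus_eq)
    qed
    show "P w = P0 w" using e PB P0B by metis
  qed
  ultimately have "Q (moore_penrose B)"
    unfolding moore_penrose_def Q_def[symmetric] by (metis (no_types, lifting) theI)
  then have sym: "B (moore_penrose B w) \<bullet> z = w \<bullet> B (moore_penrose B z)"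
    and idem: "B (moore_penrose B (B u)) = B u" for w z u unfolding Q_def by blast+
  have "A (B (moore_penrose B w)) \<bullet> u = A w \<bullet> u" for u
  proof -
    have "A (B (moore_penrose B w)) \<bullet> u = B (moore_penrose B w) \<bullet> B u" by (simp add: aw)
    also have "\<dots> = w \<bullet> B (moore_penrose B (B u))" by (rule sym)
    also have "\<dots> = A w \<bullet> u" by (simp add: idem aw)
    finally show ?thesis .
  qed
  then have "A (B (moore_penrose B w)) = A w" by (metis inner_diff_left inner_eq_zero_iff right_minus_eq)
  then show ?thesis unfolding B_def .
qed



lemma sigma_min_adj:
  fixes A :: "'a::euclidean_space \<Rightarrow> real^'m::finite"
  assumes lin: "linear A" and pos: "sigma_min A > 0"
  shows "sigma_min A * norm u \<le> norm (adjoint A u)"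
proof (cases "u = 0")
  case True then show ?thesis by simp
next
  case False
  let ?B = "adjoint A"
  have aw: "\<And>x y. x \<bullet> ?B y = A x \<bullet> y" using adjoint_works[OF lin] .
  have k: "0 < CARD('m) \<and> CARD('m) \<le> DIM('a)"
    using pos unfolding sigma_min_def sing_val_def by (auto split: if_splits)
  define S where "S = {Inf {norm (A v) | v. v \<in> V \<and> norm v = 1} | V. subspace V \<and> dim V = CARD('m)}"
  have sm: "sigma_min A = Sup S" using k unfolding sigma_min_def sing_val_def S_def by simp
  have nu: "norm u > 0" using False by simp
  have "Sup S \<le> norm (?B u) / norm u"
  proof (rule cSup_least)
    obtain T :: "'a set" where "subspace T" "dim T = CARD('m)"
      using choose_subspace_of_subspace[of "CARD('m)" "UNIV::'a set"] k by (auto simp: dim_UNIV)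
    then show "S \<noteq> {}" unfolding S_def by blast
  next
    fix s assume "s \<in> S"
    then obtain V where V: "subspace V" "dim V = CARD('m)"
      and s: "s = Inf {norm (A v) | v. v \<in> V \<and> norm v = 1}" unfolding S_def by blast
    have "\<exists>v\<in>V. norm v = 1 \<and> norm (A v) \<le> norm (?B u) / norm u"
    proof (cases "inj_on A V")
      case True
      have "span V = V" using V(1) by (simp add: span_eq_iff)
      then have "dim (A ` V) = dim V" using dim_image_eq[OF lin, of V] True by metis
      then have "span (A ` V) = UNIV" using V(2) dim_eq_full[where S="A ` V"] by simp
      moreover have "span (A ` V) = A ` V"
        using linear_subspace_image[OF lin V(1)] by (simp add: span_eq_iff)
      ultimately obtain v0 where v0: "v0 \<in> V" "A v0 = u" by (metis UNIV_I imageE)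
      have v0nz: "v0 \<noteq> 0" using v0 False lin linear_0 by metis
      then have nv0: "norm v0 > 0" by simp
      define v where "v = v0 /\<^sub>R norm v0"
      have "v \<in> V" unfolding v_def using V(1) v0(1) by (simp add: subspace_scale)
      moreover have "norm v = 1" unfolding v_def using nv0 by simp
      moreover have "norm (A v) \<le> norm (?B u) / norm u"
      proof -
        have Av: "A v = u /\<^sub>R norm v0" unfolding v_def using lin v0(2) by (simp add: linear_scale)
        have "norm u * norm u = A v0 \<bullet> u" using v0(2) by (simp add: dot_square_norm power2_eq_square)
        also have "\<dots> = v0 \<bullet> ?B u" by (simp add: aw)
        also have "\<dots> \<le> norm v0 * norm (?B u)" by (rule norm_cauchy_schwarz)
        finally have "norm u * norm u \<le> norm v0 * norm (?B u)" .
        then show ?thesis using nu nv0 Av by (simp add: field_simps)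
      qed
      ultimately show ?thesis by blast
    next
      case False
      then obtain a b where ab: "a \<in> V" "b \<in> V" "a \<noteq> b" "A a = A b" unfolding inj_on_def by blast
      define v0 where "v0 = a - b"
      have "v0 \<in> V" unfolding v0_def using V(1) ab by (simp add: subspace_diff)
      have "A v0 = 0" unfolding v0_def using lin ab by (simp add: linear_diff)
      have nv0: "norm v0 > 0" using ab unfolding v0_def by simp
      define v where "v = v0 /\<^sub>R norm v0"
      have "v \<in> V" unfolding v_def using V(1) \<open>v0 \<in> V\<close> by (simp add: subspace_scale)
      moreover have "norm v = 1" unfolding v_def using nv0 by simp
      moreover have "A v = 0" unfolding v_def using lin \<open>A v0 = 0\<close> by (simp add: linear_scale)
      ultimately show ?thesis using nu by (metis divide_nonneg_pos norm_ge_zero norm_zero)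
    qed
    then obtain v where v: "v \<in> V" "norm v = 1" "norm (A v) \<le> norm (?B u) / norm u" by blast
    have "s \<le> norm (A v)" unfolding s
      by (rule cInf_lower) (use v in \<open>auto intro!: bdd_belowI[where m=0]\<close>)
    then show "s \<le> norm (?B u) / norm u" using v by simp
  qed
  then show ?thesis using sm nu by (simp add: field_simps)
qed

lemma sigma1_bound:
  fixes A :: "'a::euclidean_space \<Rightarrow> 'b::real_normed_vector"
  assumes bl: "bounded_linear A" and d: "norm d = 1"
  shows "norm (A d) \<le> sigma1 A"
proof -
  have lin: "linear A" using bl bounded_linear.linear by blast
  have k: "0 < (1::nat) \<and> 1 \<le> DIM('a)" using DIM_positive by simp
  define S where "S = {Inf {norm (A v) | v. v \<in> V \<and> norm v = 1} | V::'a set. subspace V \<and> dim V = 1}"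
  have sm: "sigma1 A = Sup S" using k unfolding sigma1_def sing_val_def S_def by simp
  have dnz: "d \<noteq> 0" using d by auto
  have setd: "{norm (A v) | v. v \<in> span {d} \<and> norm v = 1} = {norm (A d)}"
  proof safe
    fix v assume "v \<in> span {d}" "norm v = 1"
    then obtain c where c: "v = c *\<^sub>R d" by (auto simp: span_singleton)
    then have "\<bar>c\<bar> = 1" using \<open>norm v = 1\<close> d by simp
    then show "norm (A v) = norm (A d)" using c lin by (simp add: linear_scale)
  next
    show "\<exists>v. norm (A d) = norm (A v) \<and> v \<in> span {d} \<and> norm v = 1"
      using d by (auto intro: span_base)
  qed
  have "norm (A d) \<in> S" unfolding S_def
    apply (rule CollectI, rule exI[of _ "span {d}"])
    using setd dnz by (simp add: dim_span)
  moreover have "bdd_above S"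
  proof (rule bdd_aboveI)
    fix s assume "s \<in> S"
    then obtain V where V: "subspace V" "dim V = 1"
      and s: "s = Inf {norm (A v) | v. v \<in> V \<and> norm v = 1}" unfolding S_def by blast
    have "V \<noteq> {0}" using V by auto
    moreover have "0 \<in> V" using V(1) by (simp add: subspace_0)
    ultimately obtain w where w: "w \<in> V" "w \<noteq> 0" by blast
    define v where "v = w /\<^sub>R norm w"
    have v: "v \<in> V" "norm v = 1" unfolding v_def using w V(1) by (auto simp: subspace_scale)
    have "s \<le> norm (A v)" unfolding s by (rule cInf_lower) (use v in \<open>auto intro!: bdd_belowI[where m=0]\<close>)
    also have "\<dots> \<le> onorm A * norm v" using onorm[OF bl] .
    finally show "s \<le> onorm A" using v by simp
  qed
  ultimately show ?thesis unfolding sm by (rule cSup_upper)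
qed



lemma differentiable_prod_at:
  fixes f :: "'i \<Rightarrow> 'a::real_normed_vector \<Rightarrow> real"
  assumes "\<forall>i\<in>I. f i differentiable (at z)"
  shows "(\<lambda>y. \<Prod>i\<in>I. f i y) differentiable (at z)"
proof -
  from bchoice[OF assms[unfolded differentiable_def]] obtain D where
    "\<forall>i\<in>I. (f i has_derivative D i) (at z)" by blast
  then show ?thesis unfolding differentiable_def by (blast intro: has_derivative_prod)
qed

lemma det_differentiable:
  fixes F :: "'a::real_normed_vector \<Rightarrow> real^'n::finite^'n"
  assumes "\<And>i j. (\<lambda>y. F y $ i $ j) differentiable (at z)"
  shows "(\<lambda>y. det (F y)) differentiable (at z)"
  unfolding det_def
  by (intro differentiable_sum differentiable_mult differentiable_const differentiable_prod_at ballI)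
     (auto simp: assms)

lemma vec_differentiable:
  fixes F :: "'m::finite \<Rightarrow> 'a::real_normed_vector \<Rightarrow> real"
  assumes "\<And>k. F k differentiable (at z)"
  shows "(\<lambda>y. (\<chi> k. F k y)) differentiable (at z)"
proof -
  have e: "(\<chi> k. F k y) = (\<Sum>k\<in>UNIV. F k y *\<^sub>R axis k 1)" for y
    by (simp add: vec_eq_iff axis_def sum_component if_distrib cong: if_cong)
  show ?thesis unfolding e
    by (intro differentiable_sum differentiable_scaleR differentiable_const ballI) (auto simp: assms)
qed

lemma comp_differentiable:
  fixes F :: "'a::real_normed_vector \<Rightarrow> real^'m::finite"
  assumes "F differentiable (at z)"
  shows "(\<lambda>y. F y $ i) differentiable (at z)"
  using assms unfolding differentiable_def
  using bounded_linear.has_derivative[OF bounded_linear_vec_nth] by blast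

lemma lam_differentiable:
  fixes f :: "'a::euclidean_space \<Rightarrow> real" and h :: "'a \<Rightarrow> real^'m::finite"
  assumes fs: "smooth f" and hs: "smooth h" and inj: "inj (adjoint (Dh h x))"
  shows "lam f h differentiable (at x)"
proof -
  have hd: "(h has_derivative Dh h y) (at y)" for y
    using hs unfolding smooth_def Dh_def
    by (metis frechet_derivative_works iter_dd.simps(1))
  have fd: "(f has_derivative frechet_derivative f (at y)) (at y)" for y
    using fs unfolding smooth_def
    by (metis frechet_derivative_works iter_dd.simps(1))
  have linA: "linear (Dh h y)" for y using hd[of y] has_derivative_linear by blast
  have hent: "(\<lambda>y. Dh h y b $ i) differentiable (at z)" for b i z
  proof -
    have "iter_dd [b] h differentiable (at z)" using hs unfolding smooth_def by blast
    then have "(\<lambda>y. Dh h y b) differentiable (at z)" by (simp add: Dh_def)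
    then show ?thesis by (rule comp_differentiable)
  qed
  have fent: "(\<lambda>y. frechet_derivative f (at y) b) differentiable (at z)" for b z
  proof -
    have "iter_dd [b] f differentiable (at z)" using fs unfolding smooth_def by blast
    then show ?thesis by simp
  qed
  define Mf where "Mf y = (\<chi> i j. \<Sum>b\<in>Basis. (Dh h y b)$i * (Dh h y b)$j)" for y
  define cf where "cf y = (\<chi> i. \<Sum>b\<in>Basis. frechet_derivative f (at y) b * (Dh h y b)$i)" for y
  define Nk where "Nk k y = (\<chi> i j. if j = k then cf y $ i else Mf y $ i $ j)" for k y
  have E1: "Dh h y (adjoint (Dh h y) u) = Mf y *v u" for y u
  proof -
    have "Dh h y (adjoint (Dh h y) u) = (\<Sum>b\<in>Basis. (u \<bullet> Dh h y b) *\<^sub>R Dh h y b)"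
      using linA[of y] by (simp add: adjoint_expand linear_sum linear_scale)
    then show ?thesis
      by (simp add: vec_eq_iff Mf_def matrix_vector_mult_def inner_vec_def sum_component
          sum_distrib_left sum_distrib_right mult_ac sum.swap[where A=Basis])
  qed
  have E2: "Dh h y (grad f y) = cf y" for y
  proof -
    have "grad f y = (\<Sum>b\<in>Basis. (grad f y \<bullet> b) *\<^sub>R b)" by (simp add: euclidean_representation)
    also have "\<dots> = (\<Sum>b\<in>Basis. frechet_derivative f (at y) b *\<^sub>R b)"
      using grad_works[OF fd[of y]] by simp
    finally have "Dh h y (grad f y) = (\<Sum>b\<in>Basis. frechet_derivative f (at y) b *\<^sub>R Dh h y b)"
      using linA[of y] by (simp add: linear_sum linear_scale)
    then show ?thesis by (simp add: vec_eq_iff cf_def sum_component)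
  qed
  have injeq: "det (Mf y) \<noteq> 0 \<longleftrightarrow> inj (adjoint (Dh h y))" for y
  proof -
    let ?B = "adjoint (Dh h y)"
    have aw: "\<And>a b. a \<bullet> ?B b = Dh h y a \<bullet> b" using adjoint_works[OF linA[of y]] .
    have linB: "linear ?B" using linA[of y] by (rule adjoint_linear)
    have "det (Mf y) \<noteq> 0 \<longleftrightarrow> inj (\<lambda>u. Mf y *v u)"
      using det_nz_iff_inj[of "\<lambda>u. Mf y *v u"] by (simp add: matrix_vector_mul_linear)
    also have "\<dots> \<longleftrightarrow> inj ?B"
    proof
      assume "inj (\<lambda>u. Mf y *v u)" then show "inj ?B" unfolding E1[symmetric] inj_def by auto
    next
      assume iB: "inj ?B"
      show "inj (\<lambda>u. Mf y *v u)"
      proof (rule linear_inj_on_iff_eq_0[THEN iffD2, of _ UNIV, simplified], rule matrix_vector_mul_linear, intro allI impI)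
        fix u assume "Mf y *v u = 0"
        then have "Dh h y (?B u) \<bullet> u = 0" by (simp add: E1)
        then have "?B u \<bullet> ?B u = 0" by (simp add: aw)
        then have "?B u = 0" by simp
        then show "u = 0" using iB linB by (metis linear_0 injD)
      qed
    qed
    finally show ?thesis .
  qed
  define L where "L y = (\<chi> k. det (Nk k y) / det (Mf y))" for y
  define U where "U = {y. det (Mf y) \<noteq> 0}"
  have Mdiff: "(\<lambda>y. det (Mf y)) differentiable (at z)" for z
    by (rule det_differentiable) (simp add: Mf_def hent)
  have Ndiff: "(\<lambda>y. det (Nk k y)) differentiable (at z)" for k z
  proof (rule det_differentiable)
    fix i j
    show "(\<lambda>y. Nk k y $ i $ j) differentiable (at z)"
      by (cases "j = k") (auto simp: Nk_def Mf_def cf_def intro!: differentiable_sum differentiable_mult hent fent)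
  qed
  have "open U" unfolding U_def
    by (rule open_Collect_neq) (auto intro!: continuous_at_imp_continuous_on differentiable_imp_continuous_within Mdiff)
  have xU: "x \<in> U" using injeq inj unfolding U_def by simp
  have eqL: "lam f h y = L y" if "y \<in> U" for y
  proof -
    have d: "det (Mf y) \<noteq> 0" using that unfolding U_def by simp
    then have "Dh h y (adjoint (Dh h y) (lam f h y)) = Dh h y (grad f y)"
      unfolding lam_def using mp_normal[OF linA[of y]] injeq by simp
    then have "Mf y *v lam f h y = cf y" by (simp add: E1 E2)
    then show ?thesis using cramer[OF d] unfolding L_def Nk_def by simp
  qed
  have "L differentiable (at x)"
    unfolding L_def using xU
    by (intro vec_differentiable differentiable_divide Ndiff Mdiff) (simp add: U_def)
  then obtain L' where "(L has_derivative L') (at x)" unfolding differentiable_def by blast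
  then have "(lam f h has_derivative L') (at x)"
    by (rule has_derivative_transform_within_open[OF _ \<open>open U\<close> xU]) (simp add: eqL)
  then show ?thesis unfolding differentiable_def by blast
qed



theorem mainTheorem9:
  fixes f :: "'a::euclidean_space \<Rightarrow> real"
    and h :: "'a \<Rightarrow> real^'m::finite"
    and R sig Ch \<beta> \<epsilon>1 :: real
    and x :: 'a
  assumes f_smooth: "smooth f"
    and h_smooth: "smooth h"
    and A1: "R > 0" "sig > 0" "\<forall>y. norm (h y) \<le> R \<longrightarrow> sigma_min (Dh h y) \<ge> sig"
    and A3: "Ch > 0"
       "\<forall>y v. norm (h y) \<le> R \<longrightarrow> norm (h (y + v) - h y - Dh h y v) \<le> Ch * (norm v)\<^sup>2"
    and beta_nonneg: "\<beta> \<ge> 0"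
    and xC: "norm (h x) \<le> R"
    and beta_big: "\<beta> > max (beta1 f h x) (max (beta2 f h x) (beta3 h x))"
    and grad_small: "norm (grad (gfun f h \<beta>) x) \<le> \<epsilon>1"
    and eps: "\<epsilon>1 \<le> R / 2"
  shows "\<forall>d t. norm d = 1 \<longrightarrow> 0 \<le> t \<longrightarrow>
           t \<le> (- sigma1 (Dh h x) + sqrt ((sigma1 (Dh h x))\<^sup>2 + 2 * Ch * R)) / (2 * Ch) \<longrightarrow>
           norm (h (x + t *\<^sub>R d)) \<le> R"
proof -
  define A where "A = Dh h x"
  define B where "B = adjoint A"
  define lx where "lx = lam f h x"
  have hd: "(h has_derivative Dh h y) (at y)" for y
    using h_smooth unfolding smooth_def Dh_def
    by (metis frechet_derivative_works iter_dd.simps(1))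
  have fd: "(f has_derivative frechet_derivative f (at y)) (at y)" for y
    using f_smooth unfolding smooth_def
    by (metis frechet_derivative_works iter_dd.simps(1))
  have blA: "bounded_linear A" unfolding A_def using hd[of x] has_derivative_bounded_linear by blast
  have linA: "linear A" using blA bounded_linear.linear by blast
  have linB: "linear B" unfolding B_def using linA by (rule adjoint_linear)
  have aw: "\<And>a b. a \<bullet> B b = A a \<bullet> b" unfolding B_def using adjoint_works[OF linA] .
  define s where "s = sigma_min A"
  have s_sig: "s \<ge> sig" unfolding s_def A_def using A1(3) xC by blast
  have spos: "s > 0" using s_sig A1(2) by simp
  have sB: "s * norm u \<le> norm (B u)" for u
    unfolding s_def B_def using sigma_min_adj[OF linA] spos s_def by blast
  have injB: "inj B"
  proof (rule linear_inj_on_iff_eq_0[THEN iffD2, OF linB, of UNIV, simplified], intro allI impI)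
    fix u assume "B u = 0"
    then have "s * norm u \<le> 0" using sB[of u] by simp
    then show "u = 0" using spos by (simp add: mult_le_0_iff)
  qed
  have "lam f h differentiable (at x)"
    using lam_differentiable[OF f_smooth h_smooth] injB unfolding B_def A_def by blast
  then obtain L' where lamd: "(lam f h has_derivative L') (at x)" unfolding differentiable_def by blast
  have blL: "bounded_linear L'" using lamd has_derivative_bounded_linear by blast
  have Cl: "C_lam f h x = onorm L'" unfolding C_lam_def using frechet_derivative_at[OF lamd] by simp
  define Cc where "Cc = onorm L'"
  have geq: "gfun f h \<beta> = (\<lambda>y. f y - h y \<bullet> lam f h y + \<beta> * (h y \<bullet> h y))"
    unfolding gfun_def by (simp add: power2_norm_eq_inner)
  define Df where "Df = frechet_derivative f (at x)"
  have gd: "(gfun f h \<beta> has_derivative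
      (\<lambda>v. Df v - (h x \<bullet> L' v + A v \<bullet> lx) + \<beta> * (h x \<bullet> A v + A v \<bullet> h x))) (at x)"
    unfolding geq Df_def A_def lx_def
    by (intro has_derivative_add has_derivative_diff has_derivative_mult_right has_derivative_inner fd hd lamd)
  define v where "v = B (h x)"
  define D where "D = grad (gfun f h \<beta>) x"
  have Dv: "D \<bullet> v = Df v - (h x \<bullet> L' v + A v \<bullet> lx) + \<beta> * (h x \<bullet> A v + A v \<bullet> h x)"
    unfolding D_def by (rule grad_works[OF gd])
  have gf: "grad f x \<bullet> w = Df w" for w unfolding Df_def by (rule grad_works[OF fd])
  have normal: "A (B lx) = A (grad f x)"
    unfolding lx_def lam_def B_def A_def using mp_normal[OF linA[unfolded A_def]] injB[unfolded B_def A_def] by blast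
  have t1: "Df v - A v \<bullet> lx = 0"
  proof -
    have "Df v - A v \<bullet> lx = grad f x \<bullet> v - v \<bullet> B lx" by (simp add: gf aw)
    also have "\<dots> = (grad f x - B lx) \<bullet> B (h x)" unfolding v_def by (simp add: inner_diff_left inner_diff_right inner_commute)
    also have "\<dots> = A (grad f x - B lx) \<bullet> h x" by (simp add: aw)
    also have "\<dots> = 0" using normal linA by (simp add: linear_diff)
    finally show ?thesis .
  qed
  have t2: "h x \<bullet> A v = v \<bullet> v" unfolding v_def by (simp add: aw inner_commute)
  have t3: "\<bar>h x \<bullet> L' v\<bar> \<le> norm (h x) * (Cc * norm v)"
  proof -
    have "\<bar>h x \<bullet> L' v\<bar> \<le> norm (h x) * norm (L' v)" by (rule Cauchy_Schwarz_ineq2)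
    also have "\<dots> \<le> norm (h x) * (Cc * norm v)"
      unfolding Cc_def by (rule mult_left_mono[OF onorm[OF blL] norm_ge_zero])
    finally show ?thesis .
  qed
  have DvGe: "D \<bullet> v \<ge> 2 * \<beta> * (norm v)^2 - norm (h x) * Cc * norm v"
  proof -
    have "D \<bullet> v = - (h x \<bullet> L' v) + 2 * \<beta> * (v \<bullet> v)"
      using Dv t1 t2 by (simp add: inner_commute algebra_simps)
    then show ?thesis using t3 by (simp add: power2_norm_eq_inner[symmetric] algebra_simps abs_le_iff)
  qed
  have b2: "\<beta> * s > Cc" and b3: "\<beta> * s > 1"
    using beta_big spos Cl unfolding beta2_def beta3_def Cc_def s_def[symmetric] A_def[symmetric]
    by (auto simp: field_simps)
  have hsmall: "norm (h x) \<le> R / 2"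
  proof (cases "v = 0")
    case True
    then have "s * norm (h x) \<le> 0" using sB[of "h x"] unfolding v_def by simp
    then have "h x = 0" using spos by (simp add: mult_le_0_iff)
    then show ?thesis using A1(1) by simp
  next
    case False
    then have nv: "norm v > 0" by simp
    have "D \<bullet> v \<le> norm D * norm v" by (rule norm_cauchy_schwarz)
    with DvGe have "2 * \<beta> * (norm v)^2 - norm (h x) * Cc * norm v \<le> norm D * norm v" by linarith
    then have "(2 * \<beta> * norm v - norm (h x) * Cc) * norm v \<le> norm D * norm v"
      by (simp add: power2_eq_square algebra_simps)
    then have "2 * \<beta> * norm v - norm (h x) * Cc \<le> norm D"
      by (rule mult_right_le_imp_le) (use nv in simp)
    moreover have "2 * \<beta> * norm v \<ge> 2 * \<beta> * (s * norm (h x))"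
      using sB[of "h x"] beta_nonneg unfolding v_def by (simp add: mult_left_mono)
    ultimately have "(2 * (\<beta> * s) - Cc) * norm (h x) \<le> norm D" by (simp add: algebra_simps)
    moreover have "norm (h x) \<le> (2 * (\<beta> * s) - Cc) * norm (h x)"
      using b2 b3 mult_right_mono[of 1 "2 * (\<beta> * s) - Cc" "norm (h x)"] by simp
    ultimately have "norm (h x) \<le> norm D" by linarith
    then show ?thesis using grad_small eps unfolding D_def by linarith
  qed
  show ?thesis
  proof (intro allI impI)
    fix d :: 'a and t :: real
    assume d: "norm d = 1" and t0: "0 \<le> t"
      and tle: "t \<le> (- sigma1 (Dh h x) + sqrt ((sigma1 (Dh h x))\<^sup>2 + 2 * Ch * R)) / (2 * Ch)"
    define \<sigma> where "\<sigma> = sigma1 A"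
    have Ad: "norm (A d) \<le> \<sigma>" unfolding \<sigma>_def using sigma1_bound[OF blA d] .
    have quad: "Ch * t^2 + \<sigma> * t \<le> R / 2"
    proof -
      define S where "S = \<sigma>^2 + 2 * Ch * R"
      have S0: "S \<ge> 0" unfolding S_def using A1(1) A3(1) by simp
      have u: "2 * Ch * t + \<sigma> \<le> sqrt S"
        using tle A3(1) unfolding S_def \<sigma>_def A_def by (simp add: field_simps)
      have "\<sigma> \<ge> 0" using Ad norm_ge_zero order_trans by blast
      then have l: "0 \<le> 2 * Ch * t + \<sigma>" using A3(1) t0 by simp
      have "(2 * Ch * t + \<sigma>)^2 \<le> (sqrt S)^2" using u l by (intro power_mono) auto
      then have "(2 * Ch * t + \<sigma>)^2 \<le> S" using S0 by simp
      then have "4 * Ch * (Ch * t^2 + \<sigma> * t) \<le> 4 * Ch * (R / 2)"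
        unfolding S_def by (simp add: power2_eq_square algebra_simps)
      then show ?thesis using A3(1) by simp
    qed
    have e: "norm (h (x + t *\<^sub>R d) - h x - A (t *\<^sub>R d)) \<le> Ch * (norm (t *\<^sub>R d))^2"
      using A3(2) xC unfolding A_def by blast
    have "norm (h (x + t *\<^sub>R d)) \<le> norm (h x) + norm (A (t *\<^sub>R d)) + norm (h (x + t *\<^sub>R d) - h x - A (t *\<^sub>R d))"
    proof -
      have eq: "h (x + t *\<^sub>R d) = (h x + A (t *\<^sub>R d)) + (h (x + t *\<^sub>R d) - h x - A (t *\<^sub>R d))" by simp
      show ?thesis
        using norm_triangle_ineq[of "h x + A (t *\<^sub>R d)" "h (x + t *\<^sub>R d) - h x - A (t *\<^sub>R d)"]
          norm_triangle_ineq[of "h x" "A (t *\<^sub>R d)"] arg_cong[OF eq, of norm] by linarith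
    qed
    also have "\<dots> \<le> R / 2 + t * \<sigma> + Ch * t^2"
    proof -
      have "norm (A (t *\<^sub>R d)) = t * norm (A d)" using linA t0 by (simp add: linear_scale)
      also have "\<dots> \<le> t * \<sigma>" using Ad t0 by (simp add: mult_left_mono)
      finally show ?thesis using e hsmall d t0 by simp
    qed
    also have "\<dots> \<le> R" using quad by (simp add: algebra_simps)
    finally show "norm (h (x + t *\<^sub>R d)) \<le> R" .
  qed
qed

end
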